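(* For every integer $n\ge 0$, \[ {}_{H}w_{n+1}(x)=x\frac{d}{dx}\Big((1+x)\,{}_{H}w_{n}(x)\Big)+x\,w_{n}(x). \]
   Context: $\genfrac{\{}{\}}{0pt}{}{n}{k}$ denotes the Stirling numbers of the second kind. The geometric polynomials are $w_n(x)=\sum_{k=0}^{n}\genfrac{\{}{\}}{0pt}{}{n}{k}k!\,x^k$ (so $w_0=1$). With $H_k=\sum_{i=1}^k 1/i$, the harmonic geometric polynomials are ${}_{H}w_n(x)=\sum_{k=1}^{n}\genfrac{\{}{\}}{0pt}{}{n}{k}k!\,H_k\,x^k$ (so ${}_Hw_0=0$). *)

theory Defs
  imports "HOL-Analysis.Analysis" "HOL-Combinatorics.Stirling"
begin

definition geom_poly :: "nat \<Rightarrow> real \<Rightarrow> real" where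
  "geom_poly n x = (\<Sum>k=0..n. real (Stirling n k) * fact k * x ^ k)"

definition harm_geom_poly :: "nat \<Rightarrow> real \<Rightarrow> real" where
  "harm_geom_poly n x = (\<Sum>k=1..n. real (Stirling n k) * fact k * harm k * x ^ k)"

end

theory Submission
  imports Defs
begin

lemma hgp_alt: "harm_geom_poly n t = (\<Sum>k\<le>n. real (Stirling n k) * fact k * harm k * t ^ k)"
proof -
  have "{..n} = insert 0 {1..n}" by auto
  then show ?thesis unfolding harm_geom_poly_def by (simp add: harm_def)
qed

lemma gp_alt: "geom_poly n t = (\<Sum>k\<le>n. real (Stirling n k) * fact k * t ^ k)"
  unfolding geom_poly_def by (simp add: atLeast0AtMost)

theorem proposition2:
  fixes n :: nat and x :: real
  shows "harm_geom_poly (Suc n) x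
         = x * deriv (\<lambda>t. (1 + t) * harm_geom_poly n t) x + x * geom_poly n x"
proof -
  define c where "c k = real (Stirling n k) * fact k * harm k" for k
  have hw: "harm_geom_poly n t = (\<Sum>k\<le>n. c k * t ^ k)" for t
    by (simp add: hgp_alt c_def)
  have D: "((\<lambda>t. (1 + t) * harm_geom_poly n t) has_field_derivative
      (\<Sum>k\<le>n. c k * (real k * x ^ (k - 1))) * (1 + x) + (\<Sum>k\<le>n. c k * x ^ k)) (at x)"
    unfolding hw
    by (auto intro!: derivative_eq_intros simp: algebra_simps)
  have "x * deriv (\<lambda>t. (1 + t) * harm_geom_poly n t) x
     = (\<Sum>k\<le>n. c k * real k * x ^ k) + (\<Sum>k\<le>n. c k * (real k + 1) * x ^ Suc k)"
  proof -
    have e: "x * (c k * (real k * x ^ (k - 1))) = c k * real k * x ^ k" for k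
      by (cases k) auto
    have "x * deriv (\<lambda>t. (1 + t) * harm_geom_poly n t) x
      = (\<Sum>k\<le>n. x * (c k * (real k * x ^ (k - 1)))) * (1 + x) + (\<Sum>k\<le>n. c k * x ^ Suc k)"
      using DERIV_imp_deriv[OF D] by (simp add: sum_distrib_left algebra_simps)
    also have "\<dots> = (\<Sum>k\<le>n. c k * real k * x ^ k) + (\<Sum>k\<le>n. c k * (real k + 1) * x ^ Suc k)"
      by (simp only: e, simp add: sum_distrib_right sum_distrib_left sum.distrib[symmetric] algebra_simps)
    finally show ?thesis .
  qed
  note A = this
  have B: "harm_geom_poly (Suc n) x =
     (\<Sum>k\<le>n. real (Stirling (Suc n) (Suc k)) * fact (Suc k) * harm (Suc k) * x ^ Suc k)"
    unfolding hgp_alt sum.atMost_Suc_shift by simp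
  have C: "(\<Sum>k\<le>n. real (Suc k) * real (Stirling n (Suc k)) * fact (Suc k) * harm (Suc k) * x ^ Suc k)
      = (\<Sum>k\<le>n. c k * real k * x ^ k)"
  proof -
    have c0: "c (Suc n) = 0" by (simp add: c_def)
    have "(\<Sum>k\<le>Suc n. c k * real k * x ^ k) = (\<Sum>k\<le>n. c k * real k * x ^ k)"
      by (simp add: c0)
    moreover have "(\<Sum>k\<le>Suc n. c k * real k * x ^ k) = 
      (\<Sum>k\<le>n. real (Suc k) * real (Stirling n (Suc k)) * fact (Suc k) * harm (Suc k) * x ^ Suc k)"
      unfolding sum.atMost_Suc_shift by (simp add: c_def algebra_simps)
    ultimately show ?thesis by metis
  qed
  have E: "real (Stirling n k) * fact (Suc k) * harm (Suc k) * x ^ Suc k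
     = c k * (real k + 1) * x ^ Suc k + real (Stirling n k) * fact k * x ^ Suc k" for k
    by (simp add: c_def harm_Suc field_simps)
  have "harm_geom_poly (Suc n) x = (\<Sum>k\<le>n. real (Suc k) * real (Stirling n (Suc k)) * fact (Suc k) * harm (Suc k) * x ^ Suc k
      + real (Stirling n k) * fact (Suc k) * harm (Suc k) * x ^ Suc k)"
    unfolding B by (rule sum.cong) (simp_all add: algebra_simps)
  also have "\<dots> = (\<Sum>k\<le>n. c k * real k * x ^ k) + (\<Sum>k\<le>n. c k * (real k + 1) * x ^ Suc k)
      + (\<Sum>k\<le>n. real (Stirling n k) * fact k * x ^ Suc k)"
    unfolding sum.distrib C E by simp
  also have "\<dots> = x * deriv (\<lambda>t. (1 + t) * harm_geom_poly n t) x + x * geom_poly n x"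
    unfolding A gp_alt sum_distrib_left by (simp add: algebra_simps)
  finally show ?thesis .
qed

end
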